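(* Let $\Bbbk$ be an algebraically closed field of characteristic $0$, let $\mathfrak q$ be a finite-dimensional Lie algebra over $\Bbbk$, and let $\vartheta\in\mathrm{Aut}(\mathfrak q)$ be an automorphism of finite order $m\ge 1$ with fixed-point subalgebra $\mathfrak q_0=\mathfrak q^\vartheta$. Let $n\ge 1$, $\mathfrak r=\mathfrak q^{\oplus n}$, and let $\tilde\vartheta\in\mathrm{Aut}(\mathfrak r)$ be defined by $\tilde\vartheta(y_1,y_2,\ldots,y_n)=(y_n,\vartheta(y_1),y_2,\ldots,y_{n-1})$. Suppose that $\mathfrak q_0^*\cap\mathfrak q^*_{\mathsf{reg}}\neq\varnothing$. Then $\mathfrak r_0^*\cap\mathfrak r^*_{\mathsf{reg}}\neq\varnothing$.
   Context: Fix a primitive $m$-th root of unity $\zeta$; $\mathfrak q_i$ ($i=0,\dots,m-1$) is the $\zeta^i$-eigenspace of $\vartheta$, so $\mathfrak q=\bigoplus_i\mathfrak q_i$. The space $\mathfrak q_0^*$ is identified with the annihilator of $\bigoplus_{i=1}^{m-1}\mathfrak q_i$ in $\mathfrak q^*$. Similarly $\mathfrak r_0=\mathfrak r^{\tilde\vartheta}$ and $\mathfrak r_0^*$ denotes the annihilator in $\mathfrak r^*$ of the sum of all eigenspaces of $\tilde\vartheta$ with eigenvalue $\neq 1$. For a finite-dimensional Lie algebra $\mathfrak a$ and $\xi\in\mathfrak a^*$, $\mathfrak a^\xi=\{x\in\mathfrak a: \mathrm{ad}^*(x)\xi=0\}$; the index is $\mathrm{ind}\,\mathfrak a=\min_{\xi\in\mathfrak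 a^*}\dim\mathfrak a^\xi$, and $\mathfrak a^*_{\mathsf{reg}}=\{\xi\in\mathfrak a^*:\dim\mathfrak a^\xi=\mathrm{ind}\,\mathfrak a\}$. *)

theory Defs
  imports Main "HOL-Library.Function_Algebras" "HOL-Computational_Algebra.Polynomial"
begin

text \<open>A Lie algebra is modelled as a carrier subspace L of an ambient vector space
  (type 'v with scalar multiplication scale over the field 'k), with a bracket br.\<close>

definition lie_algebra ::
  "('k::field \<Rightarrow> 'v::ab_group_add \<Rightarrow> 'v) \<Rightarrow> 'v set \<Rightarrow> ('v \<Rightarrow> 'v \<Rightarrow> 'v) \<Rightarrow> bool" where
  "lie_algebra scale L br \<longleftrightarrow>
     vector_space scale \<and> module.subspace scale L \<and>
     (\<forall>x\<in>L. \<forall>y\<in>L. br x y \<in> L) \<and>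
     (\<forall>x\<in>L. \<forall>y\<in>L. \<forall>z\<in>L. br (x + y) z = br x z + br y z) \<and>
     (\<forall>x\<in>L. \<forall>y\<in>L. \<forall>z\<in>L. br x (y + z) = br x y + br x z) \<and>
     (\<forall>c. \<forall>x\<in>L. \<forall>y\<in>L. br (scale c x) y = scale c (br x y)) \<and>
     (\<forall>c. \<forall>x\<in>L. \<forall>y\<in>L. br x (scale c y) = scale c (br x y)) \<and>
     (\<forall>x\<in>L. br x x = 0) \<and>
     (\<forall>x\<in>L. \<forall>y\<in>L. \<forall>z\<in>L. br x (br y z) + br y (br z x) + br z (br x y) = 0)"

definition fin_dim :: "('k::field \<Rightarrow> 'v::ab_group_add \<Rightarrow> 'v) \<Rightarrow> 'v set \<Rightarrow> bool" where
  "fin_dim scale L \<longleftrightarrow> (\<exists>B. finite B \<and> B \<subseteq> L \<and> module.span scale B = L)"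

definition lie_aut ::
  "('k::field \<Rightarrow> 'v::ab_group_add \<Rightarrow> 'v) \<Rightarrow> 'v set \<Rightarrow> ('v \<Rightarrow> 'v \<Rightarrow> 'v) \<Rightarrow> ('v \<Rightarrow> 'v) \<Rightarrow> bool" where
  "lie_aut scale L br \<theta> \<longleftrightarrow>
     bij_betw \<theta> L L \<and>
     (\<forall>x\<in>L. \<forall>y\<in>L. \<theta> (x + y) = \<theta> x + \<theta> y) \<and>
     (\<forall>c. \<forall>x\<in>L. \<theta> (scale c x) = scale c (\<theta> x)) \<and>
     (\<forall>x\<in>L. \<forall>y\<in>L. \<theta> (br x y) = br (\<theta> x) (\<theta> y))"

definition dual_space :: "('k::field \<Rightarrow> 'v::ab_group_add \<Rightarrow> 'v) \<Rightarrow> 'v set \<Rightarrow> ('v \<Rightarrow> 'k) set" where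
  "dual_space scale L = {\<xi>.
     (\<forall>x\<in>L. \<forall>y\<in>L. \<xi> (x + y) = \<xi> x + \<xi> y) \<and>
     (\<forall>c. \<forall>x\<in>L. \<xi> (scale c x) = c * \<xi> x) \<and>
     (\<forall>x. x \<notin> L \<longrightarrow> \<xi> x = 0)}"

definition coad :: "'v set \<Rightarrow> ('v \<Rightarrow> 'v \<Rightarrow> 'v) \<Rightarrow> 'v \<Rightarrow> ('v \<Rightarrow> 'k::field) \<Rightarrow> ('v \<Rightarrow> 'k)" where
  "coad L br x \<xi> = (\<lambda>y. if y \<in> L then - \<xi> (br x y) else 0)"

definition stabilizer :: "'v set \<Rightarrow> ('v \<Rightarrow> 'v \<Rightarrow> 'v) \<Rightarrow> ('v \<Rightarrow> 'k::field) \<Rightarrow> 'v set" where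
  "stabilizer L br \<xi> = {x \<in> L. coad L br x \<xi> = (\<lambda>_. 0)}"

definition lie_index :: "('k::field \<Rightarrow> 'v::ab_group_add \<Rightarrow> 'v) \<Rightarrow> 'v set \<Rightarrow> ('v \<Rightarrow> 'v \<Rightarrow> 'v) \<Rightarrow> nat" where
  "lie_index scale L br = (INF \<xi>\<in>dual_space scale L. vector_space.dim scale (stabilizer L br \<xi>))"

definition regular_dual :: "('k::field \<Rightarrow> 'v::ab_group_add \<Rightarrow> 'v) \<Rightarrow> 'v set \<Rightarrow> ('v \<Rightarrow> 'v \<Rightarrow> 'v) \<Rightarrow> ('v \<Rightarrow> 'k) set" where
  "regular_dual scale L br = {\<xi> \<in> dual_space scale L.
     vector_space.dim scale (stabilizer L br \<xi>) = lie_index scale L br}"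

definition eigenspace :: "('k::field \<Rightarrow> 'v::ab_group_add \<Rightarrow> 'v) \<Rightarrow> 'v set \<Rightarrow> ('v \<Rightarrow> 'v) \<Rightarrow> 'k \<Rightarrow> 'v set" where
  "eigenspace scale L \<theta> c = {x \<in> L. \<theta> x = scale c x}"

definition annihilator :: "('k::field \<Rightarrow> 'v::ab_group_add \<Rightarrow> 'v) \<Rightarrow> 'v set \<Rightarrow> 'v set \<Rightarrow> ('v \<Rightarrow> 'k) set" where
  "annihilator scale L S = {\<xi> \<in> dual_space scale L. \<forall>x\<in>S. \<xi> x = 0}"

text \<open>q_0^*: annihilator of q_1 + ... + q_{m-1}, where q_i is the zeta^i-eigenspace.\<close>
definition fixed_dual_root ::
  "('k::field \<Rightarrow> 'v::ab_group_add \<Rightarrow> 'v) \<Rightarrow> 'v set \<Rightarrow> ('v \<Rightarrow> 'v) \<Rightarrow> nat \<Rightarrow> 'k \<Rightarrow> ('v \<Rightarrow> 'k) set" where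
  "fixed_dual_root scale L \<theta> m \<zeta> =
     annihilator scale L (module.span scale (\<Union>i\<in>{1..<m}. eigenspace scale L \<theta> (\<zeta> ^ i)))"

text \<open>r_0^*: annihilator of the sum of all eigenspaces with eigenvalue different from 1.\<close>
definition fixed_dual ::
  "('k::field \<Rightarrow> 'v::ab_group_add \<Rightarrow> 'v) \<Rightarrow> 'v set \<Rightarrow> ('v \<Rightarrow> 'v) \<Rightarrow> ('v \<Rightarrow> 'k) set" where
  "fixed_dual scale L \<theta> =
     annihilator scale L (module.span scale (\<Union>c\<in>{c. c \<noteq> 1}. eigenspace scale L \<theta> c))"

text \<open>Direct sum r = q^{\<oplus> n}: tuples (y_0,...,y_{n-1}) as functions nat => 'v,
  zero from index n on.\<close>
definition sum_carrier :: "nat \<Rightarrow> 'v set \<Rightarrow> (nat \<Rightarrow> 'v::zero) set" where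
  "sum_carrier n L = {f. (\<forall>i<n. f i \<in> L) \<and> (\<forall>i\<ge>n. f i = 0)}"

definition sum_scale :: "('k \<Rightarrow> 'v \<Rightarrow> 'v) \<Rightarrow> 'k \<Rightarrow> (nat \<Rightarrow> 'v) \<Rightarrow> (nat \<Rightarrow> 'v)" where
  "sum_scale scale c f = (\<lambda>i. scale c (f i))"

definition sum_bracket :: "nat \<Rightarrow> ('v \<Rightarrow> 'v \<Rightarrow> 'v) \<Rightarrow> (nat \<Rightarrow> 'v) \<Rightarrow> (nat \<Rightarrow> 'v) \<Rightarrow> (nat \<Rightarrow> 'v::zero)" where
  "sum_bracket n br f g = (\<lambda>i. if i < n then br (f i) (g i) else 0)"

text \<open>(y_1,...,y_n) |-> (y_n, theta y_1, y_2, ..., y_{n-1}) (0-indexed here); for n = 1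
  this is theta itself.\<close>
definition cyc_twist :: "nat \<Rightarrow> ('v \<Rightarrow> 'v) \<Rightarrow> (nat \<Rightarrow> 'v) \<Rightarrow> (nat \<Rightarrow> 'v::zero)" where
  "cyc_twist n \<theta> f = (\<lambda>i. if i < n then
       (if i = 1 mod n then \<theta> (f ((i + n - 1) mod n)) else f ((i + n - 1) mod n))
     else 0)"

end

theory Submission
  imports Defs
begin

lemma sum_fun_apply: "(sum f A) i = (\<Sum>a\<in>A. f a i)"
  by (induct A rule: infinite_finite_induct) auto

lemma additive_sum_gen:
  fixes \<Xi> :: "'a::comm_monoid_add \<Rightarrow> 'b::comm_monoid_add"
  assumes "\<forall>x\<in>S. \<forall>y\<in>S. \<Xi> (x+y) = \<Xi> x + \<Xi> y" "\<forall>x\<in>S. \<forall>y\<in>S. x+y \<in> S" "0 \<in> S" "\<Xi> 0 = 0"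
    "\<forall>a\<in>A. f a \<in> S"
  shows "\<Xi> (sum f A) = (\<Sum>a\<in>A. \<Xi> (f a)) \<and> sum f A \<in> S"
  using assms(5)
proof (induct A rule: infinite_finite_induct)
  case (insert x F)
  then show ?case using assms(1-4) by auto
qed (use assms in auto)

lemma stab_iff: "x \<in> stabilizer L br \<xi> \<longleftrightarrow> x \<in> L \<and> (\<forall>y\<in>L. \<xi> (br x y) = 0)"
  unfolding stabilizer_def coad_def fun_eq_iff by auto

lemma stabI: "x \<in> L \<Longrightarrow> (\<And>y. y \<in> L \<Longrightarrow> \<xi> (br x y) = 0) \<Longrightarrow> x \<in> stabilizer L br \<xi>"
  using stab_iff by metis

lemma stabD1: "x \<in> stabilizer L br \<xi> \<Longrightarrow> x \<in> L"
  using stab_iff by metis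

lemma stabD2: "x \<in> stabilizer L br \<xi> \<Longrightarrow> y \<in> L \<Longrightarrow> \<xi> (br x y) = 0"
  using stab_iff by metis

definition inj_at :: "nat \<Rightarrow> 'v \<Rightarrow> nat \<Rightarrow> 'v::zero" where
  "inj_at i b = (\<lambda>j. if j = i then b else 0)"

definition comp_at :: "((nat \<Rightarrow> 'v::zero) \<Rightarrow> 'k) \<Rightarrow> nat \<Rightarrow> 'v \<Rightarrow> 'k" where
  "comp_at \<Xi> i = (\<lambda>z. \<Xi> (inj_at i z))"

locale LA =
  fixes scale :: "'k::field_char_0 \<Rightarrow> 'v::ab_group_add \<Rightarrow> 'v" and L :: "'v set"
    and br :: "'v \<Rightarrow> 'v \<Rightarrow> 'v" and n :: nat
  assumes lie: "lie_algebra scale L br" and fd: "fin_dim scale L"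
begin

sublocale V: vector_space scale
  using lie unfolding lie_algebra_def by auto

lemma vs_sum: "vector_space (sum_scale scale)"
  unfolding vector_space_def sum_scale_def plus_fun_def
  by (simp add: V.scale_right_distrib V.scale_left_distrib)

sublocale W: vector_space "sum_scale scale"
  by (rule vs_sum)

abbreviation "C \<equiv> sum_carrier n L"

lemma L_sub: "V.subspace L" using lie unfolding lie_algebra_def by auto

lemma L0: "0 \<in> L" and Ladd: "x \<in> L \<Longrightarrow> y \<in> L \<Longrightarrow> x + y \<in> L"
  and Lscale: "x \<in> L \<Longrightarrow> scale c x \<in> L"
  using L_sub unfolding V.subspace_def by auto

lemma brL: "x \<in> L \<Longrightarrow> y \<in> L \<Longrightarrow> br x y \<in> L"
  using lie unfolding lie_algebra_def by auto

lemma br_addl: "x \<in> L \<Longrightarrow> y \<in> L \<Longrightarrow> z \<in> L \<Longrightarrow> br (x + y) z = br x z + br y z"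
  and br_addr: "x \<in> L \<Longrightarrow> y \<in> L \<Longrightarrow> z \<in> L \<Longrightarrow> br x (y + z) = br x y + br x z"
  and br_scalel: "x \<in> L \<Longrightarrow> y \<in> L \<Longrightarrow> br (scale c x) y = scale c (br x y)"
  using lie unfolding lie_algebra_def by auto

lemma br0l: "y \<in> L \<Longrightarrow> br 0 y = 0"
  using br_addl[OF L0 L0, of y] by simp

lemma br0r: "y \<in> L \<Longrightarrow> br y 0 = 0"
  using br_addr[OF _ L0 L0, of y] by simp

lemma dual0: "\<xi> \<in> dual_space scale L \<Longrightarrow> \<xi> 0 = 0"
  unfolding dual_space_def using L0 by force

lemma stab_subspace:
  assumes "\<xi> \<in> dual_space scale L"
  shows "V.subspace (stabilizer L br \<xi>)"
proof -
  have lin: "\<xi> (x + y) = \<xi> x + \<xi> y" "\<xi> (scale c x) = c * \<xi> x" if "x \<in> L" "y \<in> L" for x y c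
    using assms that unfolding dual_space_def by auto
  show ?thesis unfolding V.subspace_def
  proof (intro conjI ballI allI)
    have "\<forall>y\<in>L. \<xi> (br 0 y) = 0" using br0l dual0[OF assms] by simp
    then show "0 \<in> stabilizer L br \<xi>" using L0 by (intro stabI) auto
  next
    fix x y assume x: "x \<in> stabilizer L br \<xi>" and y: "y \<in> stabilizer L br \<xi>"
    have xL: "x \<in> L" using x by (rule stabD1)
    have yL: "y \<in> L" using y by (rule stabD1)
    have "\<xi> (br (x + y) z) = 0" if z: "z \<in> L" for z
    proof -
      have "br (x + y) z = br x z + br y z" using br_addl xL yL z by blast
      then have "\<xi> (br (x + y) z) = \<xi> (br x z) + \<xi> (br y z)" using lin(1) brL xL yL z by simp
      then show ?thesis using stabD2[OF x z] stabD2[OF y z] by simp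
    qed
    then show "x + y \<in> stabilizer L br \<xi>" using Ladd[OF xL yL] by (intro stabI) auto
  next
    fix c x assume x: "x \<in> stabilizer L br \<xi>"
    have xL: "x \<in> L" using x by (rule stabD1)
    have "\<xi> (br (scale c x) z) = 0" if z: "z \<in> L" for z
    proof -
      have "br (scale c x) z = scale c (br x z)" using br_scalel xL z by blast
      then have "\<xi> (br (scale c x) z) = c * \<xi> (br x z)" using lin(2) brL xL z by simp
      then show ?thesis using stabD2[OF x z] by simp
    qed
    then show "scale c x \<in> stabilizer L br \<xi>" using Lscale[OF xL] by (intro stabI) auto
  qed
qed

lemma stab_sub: "stabilizer L br \<xi> \<subseteq> L"
  by (rule subsetI) (erule stabD1)

end

context LA begin

lemma inj_at_add: "inj_at i ((x::'v) + y) = inj_at i x + inj_at i y"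
  unfolding inj_at_def by (auto simp: fun_eq_iff)

lemma inj_at_scale: "inj_at i (scale c x) = sum_scale scale c (inj_at i x)"
  unfolding inj_at_def sum_scale_def by (auto simp: fun_eq_iff)

lemma inj_at_0: "inj_at i 0 = 0"
  unfolding inj_at_def by (auto simp: fun_eq_iff)

lemma inj_at_C: "i < n \<Longrightarrow> x \<in> L \<Longrightarrow> inj_at i x \<in> C"
  unfolding inj_at_def sum_carrier_def using L0 by auto

lemma inj_at_notC: "i < n \<Longrightarrow> x \<notin> L \<Longrightarrow> inj_at i x \<notin> C"
  unfolding inj_at_def sum_carrier_def by auto

lemma C_add: "x \<in> C \<Longrightarrow> y \<in> C \<Longrightarrow> x + y \<in> C"
  unfolding sum_carrier_def using Ladd by auto

lemma C_scale: "x \<in> C \<Longrightarrow> sum_scale scale c x \<in> C"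
  unfolding sum_carrier_def sum_scale_def using Lscale by auto

lemma C_0: "0 \<in> C"
  unfolding sum_carrier_def using L0 by auto

lemma C_sub: "W.subspace C"
  unfolding W.subspace_def using C_add C_scale C_0 by blast

lemma decomp: "x \<in> C \<Longrightarrow> x = (\<Sum>i<n. inj_at i (x i))"
  unfolding fun_eq_iff sum_fun_apply inj_at_def sum_carrier_def by auto

lemma span_inj:
  assumes "b \<in> V.span A" shows "inj_at i b \<in> W.span (inj_at i ` A)"
  using assms
proof (induct rule: V.span_induct)
  case base
  show ?case unfolding V.subspace_def
    by (auto simp: inj_at_0 inj_at_add inj_at_scale W.span_zero W.span_add W.span_scale)
next
  case (step x)
  then show ?case by (simp add: W.span_base)
qed

lemma fin_L: obtains F where "finite F" "F \<subseteq> L" "V.span F = L"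
  using fd unfolding fin_dim_def by auto

lemma dim_prod:
  fixes S :: "nat \<Rightarrow> 'v set"
  assumes S: "\<And>i. i < n \<Longrightarrow> V.subspace (S i) \<and> S i \<subseteq> L"
  shows "W.dim {x \<in> C. \<forall>i<n. x i \<in> S i} = (\<Sum>i<n. V.dim (S i))"
proof -
  define P where "P = {x \<in> C. \<forall>i<n. x i \<in> S i}"
  obtain F where F: "finite F" "F \<subseteq> L" "V.span F = L" by (rule fin_L)
  have "\<forall>i. \<exists>B. B \<subseteq> S i \<and> V.independent B \<and> S i \<subseteq> V.span B \<and> card B = V.dim (S i)"
    using V.basis_exists by metis
  then obtain B where B: "\<And>i. B i \<subseteq> S i" "\<And>i. V.independent (B i)"
    "\<And>i. S i \<subseteq> V.span (B i)" "\<And>i. card (B i) = V.dim (S i)"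
    by metis
  have finB: "finite (B i)" if "i < n" for i
    using V.independent_span_bound[OF F(1) B(2)[of i]] B(1)[of i] S[OF that] F(3) by blast
  have B0: "0 \<notin> B i" for i using B(2) V.dependent_zero by blast
  have BL: "B i \<subseteq> L" if "i < n" for i using B(1) S that by blast
  define E where "E = (\<Union>i<n. inj_at i ` B i)"
  have inj: "inj_on (inj_at i) (X::'v set)" for i X
    by (rule inj_onI) (drule fun_cong[of _ _ i], simp add: inj_at_def)
  have EP: "E \<subseteq> P"
  proof
    fix v assume "v \<in> E"
    then obtain i b where i: "i < n" and b: "b \<in> B i" and v: "v = inj_at i b"
      unfolding E_def by blast
    have "b \<in> L" using BL i b by blast
    moreover have "0 \<in> S j" if "j < n" for j using S[OF that] unfolding V.subspace_def by blast
    ultimately show "v \<in> P" unfolding P_def v using inj_at_C[OF i] B(1) b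
      by (auto simp: inj_at_def)
  qed
  have PE: "P \<subseteq> W.span E"
  proof
    fix x assume x: "x \<in> P"
    have "inj_at i (x i) \<in> W.span E" if i: "i < n" for i
    proof -
      have "x i \<in> V.span (B i)" using x i B(3) unfolding P_def by blast
      then have "inj_at i (x i) \<in> W.span (inj_at i ` B i)" by (rule span_inj)
      moreover have "inj_at i ` B i \<subseteq> E" using i unfolding E_def by blast
      ultimately show ?thesis using W.span_mono by blast
    qed
    then have "(\<Sum>i<n. inj_at i (x i)) \<in> W.span E" by (intro W.span_sum) auto
    then show "x \<in> W.span E" using decomp x unfolding P_def by auto
  qed
  have indep: "W.independent E"
  proof
    assume "W.dependent E"
    then obtain T u v0 where T: "finite T" "T \<subseteq> E" "(\<Sum>v\<in>T. sum_scale scale (u v) v) = 0"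
      and v0: "v0 \<in> T" "u v0 \<noteq> 0"
      unfolding W.dependent_explicit by blast
    obtain i b0 where i: "i < n" and b0: "b0 \<in> B i" and v0e: "v0 = inj_at i b0"
      using v0(1) T(2) unfolding E_def by blast
    define T' where "T' = {b \<in> B i. inj_at i b \<in> T}"
    have fT': "finite T'" using finB[OF i] unfolding T'_def by simp
    have "0 = (\<Sum>v\<in>T. sum_scale scale (u v) v) i" using T(3) by simp
    also have "\<dots> = (\<Sum>v\<in>T. scale (u v) (v i))" by (simp add: sum_fun_apply sum_scale_def)
    also have "\<dots> = (\<Sum>v\<in>inj_at i ` T'. scale (u v) (v i))"
    proof (rule sum.mono_neutral_right[OF T(1)])
      show "inj_at i ` T' \<subseteq> T" unfolding T'_def by blast
      show "\<forall>v\<in>T - inj_at i ` T'. scale (u v) (v i) = 0"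
      proof
        fix v assume v: "v \<in> T - inj_at i ` T'"
        then obtain j b where j: "j < n" "b \<in> B j" "v = inj_at j b" using T(2) unfolding E_def by blast
        have "j \<noteq> i" using v j unfolding T'_def by blast
        then show "scale (u v) (v i) = 0" using j(3) unfolding inj_at_def by simp
      qed
    qed
    also have "\<dots> = (\<Sum>b\<in>T'. scale (u (inj_at i b)) b)"
      by (subst sum.reindex[OF inj]) (simp add: inj_at_def)
    finally have "(\<Sum>b\<in>T'. scale (u (inj_at i b)) b) = 0" by simp
    moreover have "T' \<subseteq> B i" "b0 \<in> T'" using b0 v0 v0e unfolding T'_def by auto
    ultimately have "V.dependent (B i)"
      unfolding V.dependent_explicit
      by (intro exI[of _ T'] exI[of _ "\<lambda>b. u (inj_at i b)"] conjI fT' bexI[of _ b0]) (use v0(2) v0e in auto)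
    then show False using B(2) by blast
  qed
  have "card E = (\<Sum>i<n. card (inj_at i ` B i))"
    unfolding E_def
  proof (rule card_UN_disjoint)
    show "\<forall>i\<in>{..<n}. finite (inj_at i ` B i)" using finB by blast
    show "\<forall>i\<in>{..<n}. \<forall>j\<in>{..<n}. i \<noteq> j \<longrightarrow> inj_at i ` B i \<inter> inj_at j ` B j = {}"
    proof (intro ballI impI)
      fix i j :: nat assume "i \<noteq> j"
      show "inj_at i ` B i \<inter> inj_at j ` B j = {}"
      proof (rule ccontr)
        assume "inj_at i ` B i \<inter> inj_at j ` B j \<noteq> {}"
        then obtain b b' where "b \<in> B i" "b' \<in> B j" "inj_at i b = inj_at j b'" by blast
        then have "inj_at i b i = inj_at j b' i" by simp
        then have "b = 0" using \<open>i \<noteq> j\<close> unfolding inj_at_def by simp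
        then show False using B0 \<open>b \<in> B i\<close> by blast
      qed
    qed
  qed simp
  also have "\<dots> = (\<Sum>i<n. V.dim (S i))"
    using card_image[OF inj] B(4) by simp
  finally have cardE: "card E = (\<Sum>i<n. V.dim (S i))" .
  have "card E = W.dim P" by (rule W.basis_card_eq_dim[OF EP PE indep])
  then have "W.dim P = (\<Sum>i<n. V.dim (S i))" using cardE by metis
  then show ?thesis by (simp only: P_def)
qed

end

context LA begin

lemma dual_zero: "\<Xi> \<in> dual_space (sum_scale scale) C \<Longrightarrow> \<Xi> 0 = 0"
  unfolding dual_space_def using C_0 by force

lemma comp_dual:
  assumes "\<Xi> \<in> dual_space (sum_scale scale) C" "i < n"
  shows "comp_at \<Xi> i \<in> dual_space scale L"
  using assms inj_at_C[OF assms(2)] inj_at_notC[OF assms(2)]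
  unfolding dual_space_def comp_at_def by (simp add: inj_at_add inj_at_scale)

lemma dual_decomp:
  assumes "\<Xi> \<in> dual_space (sum_scale scale) C" "y \<in> C"
  shows "\<Xi> y = (\<Sum>i<n. comp_at \<Xi> i (y i))"
proof -
  have yL: "y i \<in> L" if "i < n" for i using assms(2) that unfolding sum_carrier_def by blast
  have add: "\<forall>x\<in>C. \<forall>y\<in>C. \<Xi> (x + y) = \<Xi> x + \<Xi> y"
    using assms(1) unfolding dual_space_def by blast
  have "\<Xi> y = \<Xi> (\<Sum>i<n. inj_at i (y i))" using decomp[OF assms(2)] by (rule arg_cong)
  also have "\<dots> = (\<Sum>i<n. \<Xi> (inj_at i (y i)))"
  proof -
    have h1: "\<forall>x\<in>C. \<forall>y\<in>C. x + y \<in> C" using C_add by blast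
    have h4: "\<forall>a\<in>{..<n}. inj_at a (y a) \<in> C" using inj_at_C yL by blast
    show ?thesis using additive_sum_gen[OF add h1 C_0 dual_zero[OF assms(1)] h4] by (rule conjunct1)
  qed
  finally show ?thesis unfolding comp_at_def .
qed

lemma sbr_C: "x \<in> C \<Longrightarrow> y \<in> C \<Longrightarrow> sum_bracket n br x y \<in> C"
  unfolding sum_carrier_def sum_bracket_def using brL by auto

lemma stab_sum:
  assumes D: "\<Xi> \<in> dual_space (sum_scale scale) C"
  shows "stabilizer C (sum_bracket n br) \<Xi> = {x \<in> C. \<forall>i<n. x i \<in> stabilizer L br (comp_at \<Xi> i)}"
proof (intro set_eqI iffI)
  fix x assume x: "x \<in> stabilizer C (sum_bracket n br) \<Xi>"
  have xC: "x \<in> C" using x by (rule stabD1)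
  have h: "\<And>y. y \<in> C \<Longrightarrow> \<Xi> (sum_bracket n br x y) = 0" using stabD2[OF x] by blast
  have xL: "x j \<in> L" if "j < n" for j using xC that unfolding sum_carrier_def by blast
  have "x i \<in> stabilizer L br (comp_at \<Xi> i)" if i: "i < n" for i
  proof (rule stabI)
    show "x i \<in> L" using xL i .
    fix z assume z: "z \<in> L"
    have "sum_bracket n br x (inj_at i z) = inj_at i (br (x i) z)"
      unfolding sum_bracket_def inj_at_def fun_eq_iff using i br0r xL by auto
    then show "comp_at \<Xi> i (br (x i) z) = 0"
      unfolding comp_at_def using h[OF inj_at_C[OF i z]] by simp
  qed
  then show "x \<in> {x \<in> C. \<forall>i<n. x i \<in> stabilizer L br (comp_at \<Xi> i)}" using xC by blast
next
  fix x assume x: "x \<in> {x \<in> C. \<forall>i<n. x i \<in> stabilizer L br (comp_at \<Xi> i)}"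
  have xC: "x \<in> C" using x by blast
  have h: "comp_at \<Xi> i (br (x i) z) = 0" if "i < n" "z \<in> L" for i z
  proof -
    have "x i \<in> stabilizer L br (comp_at \<Xi> i)" using x that(1) by blast
    then show ?thesis using that(2) by (rule stabD2)
  qed
  have hh: "\<Xi> (sum_bracket n br x y) = 0" if y: "y \<in> C" for y
  proof -
    have "\<Xi> (sum_bracket n br x y) = (\<Sum>i<n. comp_at \<Xi> i (sum_bracket n br x y i))"
      using dual_decomp[OF D sbr_C[OF xC y]] .
    also have "\<dots> = 0"
      using h y unfolding sum_bracket_def sum_carrier_def by simp
    finally show ?thesis .
  qed
  show "x \<in> stabilizer C (sum_bracket n br) \<Xi>" by (rule stabI[OF xC]) (rule hh)
qed

lemma dim_stab_sum:
  assumes D: "\<Xi> \<in> dual_space (sum_scale scale) C"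
  shows "W.dim (stabilizer C (sum_bracket n br) \<Xi>) = (\<Sum>i<n. V.dim (stabilizer L br (comp_at \<Xi> i)))"
  unfolding stab_sum[OF D]
  by (rule dim_prod) (use stab_subspace comp_dual[OF D] stab_sub in blast)

definition Xi :: "('v \<Rightarrow> 'k) \<Rightarrow> (nat \<Rightarrow> 'v) \<Rightarrow> 'k" where
  "Xi \<xi> = (\<lambda>f. if f \<in> C then \<Sum>i<n. \<xi> (f i) else 0)"

lemma Xi_dual:
  assumes D: "\<xi> \<in> dual_space scale L"
  shows "Xi \<xi> \<in> dual_space (sum_scale scale) C"
proof -
  have lin: "\<xi> (x + y) = \<xi> x + \<xi> y" "\<xi> (scale c x) = c * \<xi> x" if "x \<in> L" "y \<in> L" for x y c
    using D that unfolding dual_space_def by auto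
  have cL: "x i \<in> L" if "x \<in> C" "i < n" for x i using that unfolding sum_carrier_def by blast
  show ?thesis unfolding dual_space_def
  proof (intro CollectI conjI ballI allI impI)
    fix x y assume x: "x \<in> C" and y: "y \<in> C"
    show "Xi \<xi> (x + y) = Xi \<xi> x + Xi \<xi> y"
      unfolding Xi_def using C_add[OF x y] x y lin(1) cL by (simp add: sum.distrib)
  next
    fix c x assume x: "x \<in> C"
    show "Xi \<xi> (sum_scale scale c x) = c * Xi \<xi> x"
    proof -
      have lin2: "\<xi> (scale c z) = c * \<xi> z" if "z \<in> L" for z using lin(2)[OF that that] .
      show ?thesis unfolding Xi_def using C_scale[OF x] x
        by (simp add: sum_distrib_left sum_scale_def lin2 cL)
    qed
  next
    fix x assume "x \<notin> C" then show "Xi \<xi> x = 0" unfolding Xi_def by simp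
  qed
qed

lemma comp_Xi:
  assumes D: "\<xi> \<in> dual_space scale L" and i: "i < n"
  shows "comp_at (Xi \<xi>) i = \<xi>"
proof
  fix z
  show "comp_at (Xi \<xi>) i z = \<xi> z"
  proof (cases "z \<in> L")
    case True
    have "(\<Sum>j<n. \<xi> (inj_at i z j)) = (\<Sum>j<n. if j = i then \<xi> z else 0)"
      by (rule sum.cong) (auto simp: inj_at_def dual0[OF D])
    also have "\<dots> = \<xi> z" using i by simp
    finally show ?thesis unfolding comp_at_def Xi_def using inj_at_C[OF i True] by simp
  next
    case False
    then show ?thesis unfolding comp_at_def Xi_def using inj_at_notC[OF i False] D
      unfolding dual_space_def by simp
  qed
qed

lemma Xi_regular:
  assumes R: "\<xi> \<in> regular_dual scale L br"
  shows "Xi \<xi> \<in> regular_dual (sum_scale scale) C (sum_bracket n br)"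
proof -
  have D: "\<xi> \<in> dual_space scale L" and Rd: "V.dim (stabilizer L br \<xi>) = lie_index scale L br"
    using R unfolding regular_dual_def by auto
  have XD: "Xi \<xi> \<in> dual_space (sum_scale scale) C" by (rule Xi_dual[OF D])
  have le: "W.dim (stabilizer C (sum_bracket n br) (Xi \<xi>)) \<le> W.dim (stabilizer C (sum_bracket n br) \<Xi>)"
    if X: "\<Xi> \<in> dual_space (sum_scale scale) C" for \<Xi>
  proof -
    have "V.dim (stabilizer L br \<xi>) \<le> V.dim (stabilizer L br (comp_at \<Xi> i))" if i: "i < n" for i
      unfolding Rd lie_index_def by (rule cINF_lower) (auto intro: comp_dual[OF X i])
    then show ?thesis unfolding dim_stab_sum[OF X] dim_stab_sum[OF XD]
      by (intro sum_mono) (simp add: comp_Xi[OF D])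
  qed
  have "lie_index (sum_scale scale) C (sum_bracket n br) = W.dim (stabilizer C (sum_bracket n br) (Xi \<xi>))"
    unfolding lie_index_def
  proof (rule antisym)
    show "(INF \<Xi>\<in>dual_space (sum_scale scale) C. W.dim (stabilizer C (sum_bracket n br) \<Xi>))
        \<le> W.dim (stabilizer C (sum_bracket n br) (Xi \<xi>))"
      by (rule cINF_lower) (auto intro: XD)
    show "W.dim (stabilizer C (sum_bracket n br) (Xi \<xi>))
        \<le> (INF \<Xi>\<in>dual_space (sum_scale scale) C. W.dim (stabilizer C (sum_bracket n br) \<Xi>))"
      by (rule cINF_greatest) (use XD le in auto)
  qed
  then have "W.dim (stabilizer C (sum_bracket n br) (Xi \<xi>)) = lie_index (sum_scale scale) C (sum_bracket n br)"
    by (rule sym)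
  with XD show ?thesis unfolding regular_dual_def mem_Collect_eq by (rule conjI)
qed

end


lemma sum_shift_periodic:
  fixes f :: "nat \<Rightarrow> 'a::cancel_comm_monoid_add"
  assumes "f m = f 0"
  shows "(\<Sum>j<m. f (Suc j)) = (\<Sum>j<m. f j)"
proof -
  have "f 0 + (\<Sum>j<m. f (Suc j)) = (\<Sum>j<Suc m. f j)" by (simp only: sum.lessThan_Suc_shift)
  also have "\<dots> = f 0 + (\<Sum>j<m. f j)" using assms by (simp add: add.commute)
  finally show ?thesis by simp
qed

locale LAT = LA scale L br n
  for scale :: "'k::field_char_0 \<Rightarrow> 'v::ab_group_add \<Rightarrow> 'v" and L br n +
  fixes \<theta> :: "'v \<Rightarrow> 'v" and m :: nat and \<zeta> :: 'k
  assumes aut: "lie_aut scale L br \<theta>"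
    and m_pos: "m \<ge> 1"
    and order: "\<forall>x\<in>L. (\<theta> ^^ m) x = x"
    and zeta1: "\<zeta> ^ m = 1" and zeta2: "\<forall>k. 0 < k \<and> k < m \<longrightarrow> \<zeta> ^ k \<noteq> 1"
begin

lemma thL: "x \<in> L \<Longrightarrow> \<theta> x \<in> L"
  using aut unfolding lie_aut_def bij_betw_def by blast

lemma th_add: "x \<in> L \<Longrightarrow> y \<in> L \<Longrightarrow> \<theta> (x + y) = \<theta> x + \<theta> y"
  and th_scale: "x \<in> L \<Longrightarrow> \<theta> (scale c x) = scale c (\<theta> x)"
  using aut unfolding lie_aut_def by auto

lemma th0: "\<theta> 0 = 0"
  using th_add[OF L0 L0] by simp

lemma thpowL: "x \<in> L \<Longrightarrow> (\<theta> ^^ j) x \<in> L"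
  by (induct j) (auto intro: thL)

lemma Ladd': "\<forall>x\<in>L. \<forall>y\<in>L. x + y \<in> L" using Ladd by blast

lemma sum_L: "(\<And>a. a \<in> A \<Longrightarrow> f a \<in> L) \<Longrightarrow> sum f A \<in> L"
proof -
  assume "\<And>a. a \<in> A \<Longrightarrow> f a \<in> L"
  then have h: "\<forall>a\<in>A. f a \<in> L" by blast
  have h0: "\<forall>x\<in>L. \<forall>y\<in>L. (\<lambda>x. x) (x + y) = (\<lambda>x. x) x + (\<lambda>x. x) y" by simp
  show ?thesis using additive_sum_gen[OF h0 Ladd' L0 _ h] by simp
qed

lemma th_sum: "(\<And>a. a \<in> A \<Longrightarrow> f a \<in> L) \<Longrightarrow> \<theta> (sum f A) = (\<Sum>a\<in>A. \<theta> (f a))"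
proof -
  assume "\<And>a. a \<in> A \<Longrightarrow> f a \<in> L"
  then have h: "\<forall>a\<in>A. f a \<in> L" by blast
  have h0: "\<forall>x\<in>L. \<forall>y\<in>L. \<theta> (x + y) = \<theta> x + \<theta> y" using th_add by blast
  show ?thesis using additive_sum_gen[OF h0 Ladd' L0 th0 h] by (rule conjunct1)
qed

definition Q :: "nat \<Rightarrow> 'v \<Rightarrow> 'v" where
  "Q k x = (\<Sum>j<m. scale (\<zeta> ^ (k * j)) ((\<theta> ^^ j) x))"

lemma QL: "x \<in> L \<Longrightarrow> Q k x \<in> L"
  unfolding Q_def by (intro sum_L Lscale thpowL)

lemma Q_eig:
  assumes x: "x \<in> L" and k: "k \<le> m"
  shows "\<theta> (Q k x) = scale (\<zeta> ^ (m - k)) (Q k x)"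
proof -
  define f where "f j = scale (\<zeta> ^ (k * j)) ((\<theta> ^^ j) x)" for j
  have "\<theta> (Q k x) = (\<Sum>j<m. scale (\<zeta> ^ (k * j)) ((\<theta> ^^ Suc j) x))"
    unfolding Q_def by (subst th_sum) (auto intro: Lscale thpowL x simp: th_scale thpowL x)
  then have "scale (\<zeta> ^ k) (\<theta> (Q k x)) = (\<Sum>j<m. f (Suc j))"
    by (simp add: V.scale_sum_right f_def power_add mult.commute)
  also have "\<dots> = (\<Sum>j<m. f j)"
  proof (rule sum_shift_periodic)
    have "\<zeta> ^ (k * m) = (\<zeta> ^ m) ^ k" by (metis power_mult mult.commute)
    then have "\<zeta> ^ (k * m) = 1" using zeta1 by simp
    then show "f m = f 0" unfolding f_def using order x by simp
  qed
  finally have e: "scale (\<zeta> ^ k) (\<theta> (Q k x)) = Q k x" unfolding Q_def f_def .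
  have "\<zeta> ^ (m - k) * \<zeta> ^ k = 1" using k zeta1 by (simp add: power_add[symmetric])
  then show ?thesis using e by (metis V.scale_scale V.scale_one)
qed

lemma Q_sum:
  assumes x: "x \<in> L"
  shows "(\<Sum>k<m. Q k x) = scale (of_nat m) x"
proof -
  have "(\<Sum>k<m. Q k x) = (\<Sum>j<m. \<Sum>k<m. scale (\<zeta> ^ (k * j)) ((\<theta> ^^ j) x))"
    unfolding Q_def by (rule sum.swap)
  also have "\<dots> = (\<Sum>j<m. scale (\<Sum>k<m. (\<zeta> ^ j) ^ k) ((\<theta> ^^ j) x))"
    by (simp add: V.scale_sum_left power_mult[symmetric] mult.commute)
  also have "\<dots> = (\<Sum>j<m. if j = 0 then scale (of_nat m) x else 0)"
  proof (rule sum.cong)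
    fix j assume j: "j \<in> {..<m}"
    show "scale (\<Sum>k<m. (\<zeta> ^ j) ^ k) ((\<theta> ^^ j) x) = (if j = 0 then scale (of_nat m) x else 0)"
    proof (cases "j = 0")
      case False
      then have "\<zeta> ^ j \<noteq> 1" using zeta2 j by auto
      moreover have "(\<zeta> ^ j) ^ m = (\<zeta> ^ m) ^ j" by (metis power_mult mult.commute)
      then have "(\<zeta> ^ j) ^ m = 1" using zeta1 by simp
      ultimately have "(\<Sum>k<m. (\<zeta> ^ j) ^ k) = 0" by (simp add: sum_gp_strict)
      then show ?thesis using False by simp
    qed simp
  qed simp
  also have "\<dots> = scale (of_nat m) x" using m_pos by (simp add: sum.delta')
  finally show ?thesis .
qed

lemma theta_inv:
  assumes F: "\<xi> \<in> fixed_dual_root scale L \<theta> m \<zeta>"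
  shows "\<forall>x\<in>L. \<xi> (\<theta> x) = \<xi> x"
proof
  have D: "\<xi> \<in> dual_space scale L"
    and Z: "\<And>y. y \<in> V.span (\<Union>i\<in>{1..<m}. eigenspace scale L \<theta> (\<zeta> ^ i)) \<Longrightarrow> \<xi> y = 0"
    using F unfolding fixed_dual_root_def annihilator_def by auto
  have lin1: "\<xi> (x + y) = \<xi> x + \<xi> y" if "x \<in> L" "y \<in> L" for x y
    using D that unfolding dual_space_def by auto
  have lin2: "\<xi> (scale c x) = c * \<xi> x" if "x \<in> L" for x c
    using D that unfolding dual_space_def by auto
  have key: "of_nat m * \<xi> x = \<xi> (Q 0 x)" if x: "x \<in> L" for x
  proof -
    have "of_nat m * \<xi> x = \<xi> (\<Sum>k<m. Q k x)" using Q_sum[OF x] lin2[OF x] by simp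
    also have "\<dots> = (\<Sum>k<m. \<xi> (Q k x))"
      using additive_sum_gen[of L \<xi> "{..<m}" "\<lambda>k. Q k x"] L0 Ladd lin1 dual0[OF D] QL[OF x] by auto
    also have "\<dots> = (\<Sum>k<m. if k = 0 then \<xi> (Q 0 x) else 0)"
    proof (rule sum.cong)
      fix k assume k: "k \<in> {..<m}"
      show "\<xi> (Q k x) = (if k = 0 then \<xi> (Q 0 x) else 0)"
      proof (cases "k = 0")
        case False
        have "Q k x \<in> eigenspace scale L \<theta> (\<zeta> ^ (m - k))"
          unfolding eigenspace_def using QL[OF x] Q_eig[OF x] k by auto
        moreover have "m - k \<in> {1..<m}" using k False by auto
        ultimately have "Q k x \<in> V.span (\<Union>i\<in>{1..<m}. eigenspace scale L \<theta> (\<zeta> ^ i))"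
          by (intro V.span_base) blast
        then show ?thesis using Z False by simp
      qed simp
    qed simp
    also have "\<dots> = \<xi> (Q 0 x)" using m_pos by (simp add: sum.delta')
    finally show ?thesis .
  qed
  fix x assume x: "x \<in> L"
  have "Q 0 (\<theta> x) = \<theta> (Q 0 x)"
    unfolding Q_def by (subst th_sum) (auto intro: thpowL x simp: funpow_swap1)
  also have "\<dots> = Q 0 x" using Q_eig[OF x, of 0] zeta1 by simp
  finally have "of_nat m * \<xi> (\<theta> x) = of_nat m * \<xi> x" using key[OF x] key[OF thL[OF x]] by simp
  then show "\<xi> (\<theta> x) = \<xi> x" using m_pos by simp
qed

lemma cycC: "y \<in> C \<Longrightarrow> cyc_twist n \<theta> y \<in> C"
  unfolding sum_carrier_def cyc_twist_def by (auto intro!: thL)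

lemma cyc_inv:
  assumes n: "n \<ge> 1" and D: "\<xi> \<in> dual_space scale L" and I: "\<forall>x\<in>L. \<xi> (\<theta> x) = \<xi> x"
    and y: "y \<in> C"
  shows "Xi \<xi> (cyc_twist n \<theta> y) = Xi \<xi> y"
proof -
  have yL: "y i \<in> L" if "i < n" for i using y that unfolding sum_carrier_def by blast
  have "(\<Sum>i<n. \<xi> (cyc_twist n \<theta> y i)) = (\<Sum>i<n. \<xi> (y ((i + n - 1) mod n)))"
    by (rule sum.cong) (auto simp: cyc_twist_def I yL)
  also have "\<dots> = (\<Sum>i<n. \<xi> (y i))"
  proof -
    obtain n' where n': "n = Suc n'" using n by (cases n) auto
    have md: "(Suc i + Suc n' - 1) mod Suc n' = i" if "i < n'" for i
    proof -
      have e1: "Suc i + Suc n' - 1 = i + Suc n'" by simp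
      have e2: "(i + Suc n') mod Suc n' = i mod Suc n'" by (rule mod_add_self2)
      have e3: "i mod Suc n' = i" using that by simp
      show ?thesis by (simp only: e1 e2 e3)
    qed
    have "(\<Sum>i<Suc n'. \<xi> (y ((i + Suc n' - 1) mod Suc n'))) =
          \<xi> (y n') + (\<Sum>i<n'. \<xi> (y ((Suc i + Suc n' - 1) mod Suc n')))"
      by (simp only: sum.lessThan_Suc_shift) simp
    also have "(\<Sum>i<n'. \<xi> (y ((Suc i + Suc n' - 1) mod Suc n'))) = (\<Sum>i<n'. \<xi> (y i))"
      by (rule sum.cong) (auto simp only: md lessThan_iff)
    finally show ?thesis unfolding n' by (simp add: add.commute)
  qed
  finally show ?thesis unfolding Xi_def using cycC[OF y] y by simp
qed

lemma Xi_fixed: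
  assumes n: "n \<ge> 1" and D: "\<xi> \<in> dual_space scale L" and I: "\<forall>x\<in>L. \<xi> (\<theta> x) = \<xi> x"
  shows "Xi \<xi> \<in> fixed_dual (sum_scale scale) C (cyc_twist n \<theta>)"
proof -
  have XD: "Xi \<xi> \<in> dual_space (sum_scale scale) C" by (rule Xi_dual[OF D])
  have lin1: "Xi \<xi> (x + y) = Xi \<xi> x + Xi \<xi> y" if "x \<in> C" "y \<in> C" for x y
    using XD that unfolding dual_space_def by auto
  have lin2: "Xi \<xi> (sum_scale scale c x) = c * Xi \<xi> x" if "x \<in> C" for x c
    using XD that unfolding dual_space_def by auto
  have "y \<in> C \<and> Xi \<xi> y = 0"
    if "y \<in> W.span (\<Union>c\<in>{c. c \<noteq> 1}. eigenspace (sum_scale scale) C (cyc_twist n \<theta>) c)" for y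
    using that
  proof (induct rule: W.span_induct)
    case base
    show ?case unfolding W.subspace_def
      using C_0 dual_zero[OF XD] C_add C_scale lin1 lin2 by auto
  next
    case (step y)
    then obtain c where c: "c \<noteq> 1" and yC: "y \<in> C" and e: "cyc_twist n \<theta> y = sum_scale scale c y"
      unfolding eigenspace_def by blast
    have "c * Xi \<xi> y = Xi \<xi> y" using cyc_inv[OF n D I yC] e lin2[OF yC] by simp
    then have "(c - 1) * Xi \<xi> y = 0" by (simp add: algebra_simps)
    then show ?case using c yC by simp
  qed
  then show ?thesis unfolding fixed_dual_def annihilator_def using XD by blast
qed

end


theorem lemma2p1:
  fixes scale :: "'k::field_char_0 \<Rightarrow> 'v::ab_group_add \<Rightarrow> 'v"
    and L :: "'v set" and br :: "'v \<Rightarrow> 'v \<Rightarrow> 'v" and \<theta> :: "'v \<Rightarrow> 'v"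
    and m n :: nat and \<zeta> :: 'k
  assumes alg_closed: "\<forall>p :: 'k poly. degree p > 0 \<longrightarrow> (\<exists>x. poly p x = 0)"
    and lie: "lie_algebra scale L br"
    and fd: "fin_dim scale L"
    and aut: "lie_aut scale L br \<theta>"
    and m_pos: "m \<ge> 1"
    and order: "\<forall>x\<in>L. (\<theta> ^^ m) x = x"
    and order_min: "\<forall>k. 0 < k \<and> k < m \<longrightarrow> \<not> (\<forall>x\<in>L. (\<theta> ^^ k) x = x)"
    and zeta: "\<zeta> ^ m = 1" "\<forall>k. 0 < k \<and> k < m \<longrightarrow> \<zeta> ^ k \<noteq> 1"
    and n_pos: "n \<ge> 1"
    and hyp: "fixed_dual_root scale L \<theta> m \<zeta> \<inter> regular_dual scale L br \<noteq> {}"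
  shows "fixed_dual (sum_scale scale) (sum_carrier n L) (cyc_twist n \<theta>)
           \<inter> regular_dual (sum_scale scale) (sum_carrier n L) (sum_bracket n br) \<noteq> {}"
proof -
  interpret T: LAT scale L br n \<theta> m \<zeta>
    by unfold_locales (use lie fd aut m_pos order zeta in auto)
  from hyp obtain \<xi> where F: "\<xi> \<in> fixed_dual_root scale L \<theta> m \<zeta>"
    and R: "\<xi> \<in> regular_dual scale L br" by blast
  have D: "\<xi> \<in> dual_space scale L" using R unfolding regular_dual_def by blast
  have "T.Xi \<xi> \<in> fixed_dual (sum_scale scale) (sum_carrier n L) (cyc_twist n \<theta>)"
    by (rule T.Xi_fixed[OF n_pos D T.theta_inv[OF F]])
  moreover have "T.Xi \<xi> \<in> regular_dual (sum_scale scale) (sum_carrier n L) (sum_bracket n br)"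
    by (rule T.Xi_regular[OF R])
  ultimately show ?thesis by blast
qed

end
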